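(* Let $\lambda\in(0,1)$ and let $G$ be a finite simple connected graph with $n\ge 2$ vertices. Then $$\min_{1\le D\le n-1}\left[\frac{\lambda\left[D\lambda^{D}-\lambda-(D-1)\lambda^{D+1}\right]}{(\lambda-1)^2}+(n-D-1)\left(\lambda^{D}-D\lambda^{D}\right)\right]\;\le\; m\nu^{e}_{\lambda}(G)\;\le\;0.$$ The lower bound is attained for a broom on $n$ vertices (at its starting vertex), and the upper bound is attained for every vertex-transitive graph.
   Context: $d(u,v)$ denotes graph distance and $[u]$ the set of neighbours of $u$. $t^{e}_{\lambda}(u)=\sum_{v\in V\setminus\{u\}} d(u,v)\lambda^{d(u,v)}$. For vertices $k,l$, $s^{kl}$ is the number of shortest $k$–$l$ paths and, for an edge $uv$, $s^{kl}_{uv}$ is the number of those passing through the edge $uv$. The exponential edge betweenness of an edge $uv$ is $b^{e}_{\lambda}(uv)=\sum_{\{k,l\}}\frac{s^{kl}_{uv}}{s^{kl}}\lambda^{d(k,l)}$ over all unordered pairs $\{k,l\}$ of distinct vertices; $c^{e}_{\lambda}(u)=\sum_{v\in[u]}b^{e}_{\lambda}(uv)$. The network surplus of $u$ is $\nu^{e}_{\lambda}(u)=c^{e}_{\lambda}(u)-t^{e}_{\lambda}(u)$ and $m\nu^{e}_{\lambda}(G)=\min\{\nu^{e}_{\lambda}(u):u\in V(G)\}$. A broom on $n$ vertices (with parameter $D$, $1\le D\le n-1$) is the graph consisting of a path $u=v_0v_1\cdots v_D$ together with $n-D-1$ further vertices each adjacent only to $v_{D-1}$; $u=v_0$ is its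 starting vertex. *)

theory Defs
  imports Complex_Main
begin

definition simple_graph :: "'a set \<Rightarrow> ('a \<Rightarrow> 'a \<Rightarrow> bool) \<Rightarrow> bool" where
  "simple_graph V E \<longleftrightarrow> finite V \<and>
     (\<forall>u v. E u v \<longrightarrow> u \<in> V \<and> v \<in> V \<and> u \<noteq> v \<and> E v u)"

definition walk :: "'a set \<Rightarrow> ('a \<Rightarrow> 'a \<Rightarrow> bool) \<Rightarrow> 'a \<Rightarrow> 'a \<Rightarrow> 'a list \<Rightarrow> bool" where
  "walk V E u v xs \<longleftrightarrow> xs \<noteq> [] \<and> set xs \<subseteq> V \<and> hd xs = u \<and> last xs = v \<and>
     (\<forall>i. Suc i < length xs \<longrightarrow> E (xs ! i) (xs ! Suc i))"

definition connected_graph :: "'a set \<Rightarrow> ('a \<Rightarrow> 'a \<Rightarrow> bool) \<Rightarrow> bool" where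
  "connected_graph V E \<longleftrightarrow> (\<forall>u\<in>V. \<forall>v\<in>V. \<exists>xs. walk V E u v xs)"

definition gdist :: "'a set \<Rightarrow> ('a \<Rightarrow> 'a \<Rightarrow> bool) \<Rightarrow> 'a \<Rightarrow> 'a \<Rightarrow> nat" where
  "gdist V E u v = (LEAST n. \<exists>xs. walk V E u v xs \<and> length xs = Suc n)"

definition neighbours :: "'a set \<Rightarrow> ('a \<Rightarrow> 'a \<Rightarrow> bool) \<Rightarrow> 'a \<Rightarrow> 'a set" where
  "neighbours V E u = {v \<in> V. E u v}"

definition shortest_paths :: "'a set \<Rightarrow> ('a \<Rightarrow> 'a \<Rightarrow> bool) \<Rightarrow> 'a \<Rightarrow> 'a \<Rightarrow> 'a list set" where
  "shortest_paths V E k l = {xs. walk V E k l xs \<and> length xs = Suc (gdist V E k l)}"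

definition uses_edge :: "'a list \<Rightarrow> 'a \<Rightarrow> 'a \<Rightarrow> bool" where
  "uses_edge xs u v \<longleftrightarrow> (\<exists>i. Suc i < length xs \<and> {xs ! i, xs ! Suc i} = {u, v})"

definition num_sp :: "'a set \<Rightarrow> ('a \<Rightarrow> 'a \<Rightarrow> bool) \<Rightarrow> 'a \<Rightarrow> 'a \<Rightarrow> nat" where
  "num_sp V E k l = card (shortest_paths V E k l)"

definition num_sp_edge :: "'a set \<Rightarrow> ('a \<Rightarrow> 'a \<Rightarrow> bool) \<Rightarrow> 'a \<Rightarrow> 'a \<Rightarrow> 'a \<Rightarrow> 'a \<Rightarrow> nat" where
  "num_sp_edge V E k l u v = card {xs \<in> shortest_paths V E k l. uses_edge xs u v}"

definition exp_t :: "real \<Rightarrow> 'a set \<Rightarrow> ('a \<Rightarrow> 'a \<Rightarrow> bool) \<Rightarrow> 'a \<Rightarrow> real" where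
  "exp_t lam V E u = (\<Sum>v\<in>V - {u}. real (gdist V E u v) * lam ^ gdist V E u v)"

text \<open>Exponential edge betweenness. The sum over unordered pairs {k,l} of distinct
  vertices is written as half the sum over ordered pairs (k,l), k \<noteq> l; the summand
  is symmetric in k and l.\<close>
definition exp_edge_betw :: "real \<Rightarrow> 'a set \<Rightarrow> ('a \<Rightarrow> 'a \<Rightarrow> bool) \<Rightarrow> 'a \<Rightarrow> 'a \<Rightarrow> real" where
  "exp_edge_betw lam V E u v =
     (\<Sum>(k,l)\<in>{(k,l). k \<in> V \<and> l \<in> V \<and> k \<noteq> l}.
        real (num_sp_edge V E k l u v) / real (num_sp V E k l) * lam ^ gdist V E k l) / 2"

definition exp_c :: "real \<Rightarrow> 'a set \<Rightarrow> ('a \<Rightarrow> 'a \<Rightarrow> bool) \<Rightarrow> 'a \<Rightarrow> real" where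
  "exp_c lam V E u = (\<Sum>v\<in>neighbours V E u. exp_edge_betw lam V E u v)"

definition surplus :: "real \<Rightarrow> 'a set \<Rightarrow> ('a \<Rightarrow> 'a \<Rightarrow> bool) \<Rightarrow> 'a \<Rightarrow> real" where
  "surplus lam V E u = exp_c lam V E u - exp_t lam V E u"

definition min_surplus :: "real \<Rightarrow> 'a set \<Rightarrow> ('a \<Rightarrow> 'a \<Rightarrow> bool) \<Rightarrow> real" where
  "min_surplus lam V E = Min (surplus lam V E ` V)"

definition vertex_transitive :: "'a set \<Rightarrow> ('a \<Rightarrow> 'a \<Rightarrow> bool) \<Rightarrow> bool" where
  "vertex_transitive V E \<longleftrightarrow>
     (\<forall>u\<in>V. \<forall>v\<in>V. \<exists>f. bij_betw f V V \<and> (\<forall>x\<in>V. \<forall>y\<in>V. E x y \<longleftrightarrow> E (f x) (f y)) \<and> f u = v)"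

text \<open>Broom on n vertices with parameter D: vertices 0..n-1, path 0-1-...-D,
  and vertices D+1..n-1 each adjacent only to D-1. Starting vertex is 0.\<close>
definition broom_V :: "nat \<Rightarrow> nat set" where
  "broom_V n = {..<n}"

definition broom_E :: "nat \<Rightarrow> nat \<Rightarrow> nat \<Rightarrow> nat \<Rightarrow> bool" where
  "broom_E n D i j \<longleftrightarrow> i < n \<and> j < n \<and>
     ((i \<le> D \<and> j \<le> D \<and> (j = Suc i \<or> i = Suc j)) \<or>
      (D < i \<and> j = D - 1) \<or> (D < j \<and> i = D - 1))"

definition lower_bound_expr :: "real \<Rightarrow> nat \<Rightarrow> nat \<Rightarrow> real" where
  "lower_bound_expr lam n D =
     lam * (real D * lam ^ D - lam - (real D - 1) * lam ^ (D + 1)) / (lam - 1)^2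
     + (real n - real D - 1) * (lam ^ D - real D * lam ^ D)"

end

theory Submission
  imports Defs
begin



lemma walk_take:
  assumes "walk V E u v xs" "i < length xs"
  shows "walk V E u (xs!i) (take (Suc i) xs)"
  using assms unfolding walk_def
  by (auto simp: hd_take last_conv_nth dest: in_set_takeD)

lemma walk_drop:
  assumes "walk V E u v xs" "i < length xs"
  shows "walk V E (xs!i) v (drop i xs)"
  using assms unfolding walk_def
  by (auto simp: hd_drop_conv_nth dest: in_set_dropD)

lemma walk_Cons2:
  "walk V E u v (x # y # zs) \<longleftrightarrow> u = x \<and> x \<in> V \<and> E x y \<and> walk V E y v (y # zs)"
proof
  assume w: "walk V E u v (x # y # zs)"
  then show "u = x \<and> x \<in> V \<and> E x y \<and> walk V E y v (y # zs)"
    unfolding walk_def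
    by auto
next
  assume "u = x \<and> x \<in> V \<and> E x y \<and> walk V E y v (y # zs)"
  then show "walk V E u v (x # y # zs)"
    unfolding walk_def
    apply (auto)
    subgoal for i by (cases i) auto
    done
qed

lemma walk_single: "walk V E u v [x] \<longleftrightarrow> u = x \<and> v = x \<and> x \<in> V"
  unfolding walk_def by auto

lemma walk_append:
  assumes "walk V E u w xs" "walk V E w v ys"
  shows "walk V E u v (xs @ tl ys)"
  using assms
proof (induction xs arbitrary: u)
  case Nil then show ?case by (simp add: walk_def)
next
  case (Cons x xs)
  show ?case
  proof (cases xs)
    case Nil
    with Cons.prems have "u = x" "w = x" by (auto simp: walk_single)
    moreover have "ys \<noteq> []" "hd ys = w" using Cons.prems(2) by (auto simp: walk_def)
    ultimately have "[x] @ tl ys = ys" by (cases ys) auto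
    then show ?thesis using Nil Cons.prems \<open>u = x\<close> \<open>w = x\<close> by simp
  next
    case (Cons y zs)
    with Cons.prems have *: "u = x" "x \<in> V" "E x y" "walk V E y w (y # zs)"
      by (auto simp: walk_Cons2)
    have "walk V E y v ((y # zs) @ tl ys)" using Cons.IH * Cons.prems(2) Cons by simp
    then show ?thesis using * Cons by (simp add: walk_Cons2)
  qed
qed

lemma walk_rev:
  assumes "walk V E u v xs" "\<And>a b. E a b \<Longrightarrow> E b a"
  shows "walk V E v u (rev xs)"
  using assms(1) unfolding walk_def
proof (intro conjI)
  assume w: "xs \<noteq> [] \<and> set xs \<subseteq> V \<and> hd xs = u \<and> last xs = v \<and> (\<forall>i. Suc i < length xs \<longrightarrow> E (xs ! i) (xs ! Suc i))"
  show "\<forall>i. Suc i < length (rev xs) \<longrightarrow> E (rev xs ! i) (rev xs ! Suc i)"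
  proof (intro allI impI)
    fix i assume i: "Suc i < length (rev xs)"
    define j where "j = length xs - Suc (Suc i)"
    have "Suc j < length xs" "Suc j = length xs - Suc i" using i by (auto simp: j_def)
    then have "E (xs ! j) (xs ! Suc j)" using w by blast
    then have "E (xs ! (length xs - Suc i)) (xs ! j)" using assms(2) \<open>Suc j = length xs - Suc i\<close> by metis
    moreover have "length xs - Suc (Suc i) = j" by (simp add: j_def)
    ultimately show "E (rev xs ! i) (rev xs ! Suc i)" using i
      by (simp add: rev_nth)
  qed
qed (auto simp: hd_rev last_rev)




locale cgraph =
  fixes V :: "'a set" and E :: "'a \<Rightarrow> 'a \<Rightarrow> bool"
  assumes sg: "simple_graph V E" and cg: "connected_graph V E"
begin

lemma finV: "finite V" using sg by (simp add: simple_graph_def)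
lemma Esym: "E a b \<Longrightarrow> E b a" using sg by (simp add: simple_graph_def)
lemma Ein: "E a b \<Longrightarrow> a \<in> V \<and> b \<in> V \<and> a \<noteq> b" using sg by (simp add: simple_graph_def)

lemma walk_ex: "u \<in> V \<Longrightarrow> v \<in> V \<Longrightarrow> \<exists>xs. walk V E u v xs"
  using cg by (simp add: connected_graph_def)

lemma walk_ends: "walk V E u v xs \<Longrightarrow> u \<in> V \<and> v \<in> V"
  unfolding walk_def by (metis hd_in_set last_in_set subsetD)

lemma gdist_ex:
  assumes "u \<in> V" "v \<in> V"
  shows "\<exists>xs. walk V E u v xs \<and> length xs = Suc (gdist V E u v)"
proof -
  obtain xs where w: "walk V E u v xs" using walk_ex assms by blast
  then have "xs \<noteq> []" by (simp add: walk_def)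
  then have "\<exists>n xs. walk V E u v xs \<and> length xs = Suc n" using w
    by (metis length_greater_0_conv Suc_pred)
  then show ?thesis unfolding gdist_def by (rule LeastI_ex)
qed

lemma gdist_le:
  assumes "walk V E u v xs"
  shows "gdist V E u v \<le> length xs - 1"
proof -
  have "xs \<noteq> []" using assms by (simp add: walk_def)
  then have "walk V E u v xs \<and> length xs = Suc (length xs - 1)" using assms by simp
  then show ?thesis unfolding gdist_def by (blast intro: Least_le)
qed

lemma gdist_tri:
  assumes "u \<in> V" "w \<in> V" "v \<in> V"
  shows "gdist V E u v \<le> gdist V E u w + gdist V E w v"
proof -
  obtain xs where xs: "walk V E u w xs" "length xs = Suc (gdist V E u w)" using gdist_ex assms by blast
  obtain ys where ys: "walk V E w v ys" "length ys = Suc (gdist V E w v)" using gdist_ex assms by blast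
  have "walk V E u v (xs @ tl ys)" using walk_append[OF xs(1) ys(1)] .
  from gdist_le[OF this] show ?thesis using xs ys by simp
qed

lemma gdist_sym_le:
  assumes "u \<in> V" "v \<in> V"
  shows "gdist V E v u \<le> gdist V E u v"
proof -
  obtain xs where xs: "walk V E u v xs" "length xs = Suc (gdist V E u v)" using gdist_ex assms by blast
  have "walk V E v u (rev xs)" using walk_rev[OF xs(1)] Esym by blast
  from gdist_le[OF this] show ?thesis using xs by simp
qed

lemma gdist_sym: "u \<in> V \<Longrightarrow> v \<in> V \<Longrightarrow> gdist V E v u = gdist V E u v"
  using gdist_sym_le by (meson le_antisym)

lemma gdist_0: 
  assumes "u \<in> V" "v \<in> V"
  shows "gdist V E u v = 0 \<longleftrightarrow> u = v"
proof
  assume "gdist V E u v = 0"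
  then obtain xs where "walk V E u v xs" "length xs = 1" using gdist_ex assms by fastforce
  then show "u = v" by (cases xs) (auto simp: walk_def)
next
  assume "u = v"
  then have "walk V E u v [u]" using assms by (simp add: walk_def)
  from gdist_le[OF this] show "gdist V E u v = 0" by simp
qed

lemma SP_walk: "xs \<in> shortest_paths V E k l \<Longrightarrow> walk V E k l xs \<and> length xs = Suc (gdist V E k l)"
  by (simp add: shortest_paths_def)

lemma SP_nth:
  assumes "xs \<in> shortest_paths V E k l" "i < length xs"
  shows "gdist V E k (xs ! i) = i"
proof -
  have w: "walk V E k l xs" and len: "length xs = Suc (gdist V E k l)" using SP_walk assms by auto
  have V: "k \<in> V" "l \<in> V" "xs ! i \<in> V" using walk_ends[OF w] w assms(2) unfolding walk_def
    by (auto simp: nth_mem subsetD)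
  have a: "gdist V E k (xs!i) \<le> i" using gdist_le[OF walk_take[OF w assms(2)]] assms(2) by simp
  have b: "gdist V E (xs!i) l \<le> length xs - 1 - i" using gdist_le[OF walk_drop[OF w assms(2)]] by simp
  have "gdist V E k l \<le> gdist V E k (xs!i) + gdist V E (xs!i) l" using gdist_tri V by blast
  then show ?thesis using a b len assms(2) by linarith
qed

lemma SP_distinct:
  assumes "xs \<in> shortest_paths V E k l"
  shows "distinct xs"
  unfolding distinct_conv_nth
proof (intro allI impI)
  fix i j assume "i < length xs" "j < length xs" "i \<noteq> j"
  then show "xs ! i \<noteq> xs ! j" using SP_nth[OF assms] by metis
qed

lemma SP_finite: "finite (shortest_paths V E k l)"
proof -
  have "shortest_paths V E k l \<subseteq> {xs. set xs \<subseteq> V \<and> length xs = Suc (gdist V E k l)}"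
    by (auto simp: shortest_paths_def walk_def)
  then show ?thesis using finite_lists_length_eq[OF finV] finite_subset by blast
qed

lemma SP_ne: "k \<in> V \<Longrightarrow> l \<in> V \<Longrightarrow> shortest_paths V E k l \<noteq> {}"
  using gdist_ex by (auto simp: shortest_paths_def)

lemma num_sp_pos: "k \<in> V \<Longrightarrow> l \<in> V \<Longrightarrow> num_sp V E k l > 0"
  unfolding num_sp_def using SP_ne SP_finite by (simp add: card_gt_0_iff)

end



context cgraph begin

definition "Pairs = {(k,l). k \<in> V \<and> l \<in> V \<and> k \<noteq> l}"

lemma finite_Pairs: "finite Pairs"
proof -
  have "Pairs \<subseteq> V \<times> V" by (auto simp: Pairs_def)
  then show ?thesis using finV finite_subset by blast
qed

lemma nbr_sub: "neighbours V E u \<subseteq> V" by (auto simp: neighbours_def)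
lemma finite_nbr: "finite (neighbours V E u)" using nbr_sub finV finite_subset by blast
lemma finite_Sig: "finite (Sigma V (neighbours V E))"
  using finV finite_nbr by blast

lemma edge_count:
  assumes xs: "xs \<in> shortest_paths V E k l"
  shows "card {uv \<in> Sigma V (neighbours V E). uses_edge xs (fst uv) (snd uv)} = 2 * gdist V E k l"
proof -
  define d where "d = gdist V E k l"
  have w: "walk V E k l xs" and len: "length xs = Suc d" using SP_walk[OF xs] by (auto simp: d_def)
  have dis: "distinct xs" using SP_distinct[OF xs] .
  define h where "h = (\<lambda>(i::nat,b::bool). if b then (xs!i, xs!Suc i) else (xs!Suc i, xs!i))"
  have eq: "{uv \<in> Sigma V (neighbours V E). uses_edge xs (fst uv) (snd uv)} = h ` ({..<d} \<times> UNIV)"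
  proof (intro equalityI subsetI)
    fix uv assume "uv \<in> {uv \<in> Sigma V (neighbours V E). uses_edge xs (fst uv) (snd uv)}"
    then obtain i where i: "Suc i < length xs" "{xs ! i, xs ! Suc i} = {fst uv, snd uv}"
      by (auto simp: uses_edge_def)
    then have "uv = h (i, True) \<or> uv = h (i, False)" by (auto simp: h_def doubleton_eq_iff prod_eq_iff)
    then show "uv \<in> h ` ({..<d} \<times> UNIV)" using i len by force
  next
    fix uv assume "uv \<in> h ` ({..<d} \<times> UNIV)"
    then obtain i b where ib: "i < d" "uv = h (i, b)" by auto
    have E: "E (xs!i) (xs!Suc i)" using w ib len by (simp add: walk_def)
    have ue: "uses_edge xs (fst uv) (snd uv)" using ib len unfolding uses_edge_def
      by (intro exI[of _ i]) (auto simp: h_def)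
    show "uv \<in> {uv \<in> Sigma V (neighbours V E). uses_edge xs (fst uv) (snd uv)}"
      using ue E Ein Esym ib by (auto simp: h_def neighbours_def)
  qed
  have inj: "inj_on h ({..<d} \<times> UNIV)"
  proof (rule inj_onI)
    fix p q assume p: "p \<in> {..<d} \<times> (UNIV::bool set)" and q: "q \<in> {..<d} \<times> (UNIV::bool set)" and hpq: "h p = h q"
    obtain i b where [simp]: "p = (i,b)" by (cases p)
    obtain j c where [simp]: "q = (j,c)" by (cases q)
    have ij: "i < d" "j < d" using p q by auto
    have nth_inj: "\<And>a b'. a < length xs \<Longrightarrow> b' < length xs \<Longrightarrow> xs ! a = xs ! b' \<Longrightarrow> a = b'"
      using dis by (simp add: nth_eq_iff_index_eq)
    show "p = q"
      using hpq ij len nth_inj[of i j] nth_inj[of "Suc i" "Suc j"] nth_inj[of i "Suc j"] nth_inj[of "Suc i" j]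
      by (cases b; cases c) (auto simp: h_def)
  qed
  have "card (h ` ({..<d} \<times> UNIV)) = card ({..<d} \<times> (UNIV :: bool set))"
    using card_image[OF inj] .
  also have "\<dots> = 2 * d" by (simp add: card_cartesian_product)
  finally show ?thesis using eq by (simp add: d_def)
qed

lemma real_card_filter: "finite A \<Longrightarrow> real (card {x \<in> A. P x}) = (\<Sum>x\<in>A. if P x then 1 else 0)"
  by (simp add: sum.inter_filter[symmetric])

lemma sum_nse:
  assumes "k \<in> V" "l \<in> V"
  shows "(\<Sum>u\<in>V. \<Sum>v\<in>neighbours V E u. real (num_sp_edge V E k l u v))
       = 2 * real (gdist V E k l) * real (num_sp V E k l)"
proof -
  let ?S = "shortest_paths V E k l"
  let ?Sig = "Sigma V (neighbours V E)"
  have "(\<Sum>u\<in>V. \<Sum>v\<in>neighbours V E u. real (num_sp_edge V E k l u v))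
      = (\<Sum>u\<in>V. \<Sum>v\<in>neighbours V E u. \<Sum>xs\<in>?S. if uses_edge xs u v then 1 else 0)"
    unfolding num_sp_edge_def using SP_finite by (simp add: real_card_filter)
  also have "\<dots> = (\<Sum>uv\<in>?Sig. \<Sum>xs\<in>?S. if uses_edge xs (fst uv) (snd uv) then 1 else 0)"
    using finV finite_nbr by (simp add: sum.Sigma split_beta)
  also have "\<dots> = (\<Sum>xs\<in>?S. \<Sum>uv\<in>?Sig. if uses_edge xs (fst uv) (snd uv) then 1 else 0)"
    by (rule sum.swap)
  also have "\<dots> = (\<Sum>xs\<in>?S. real (2 * gdist V E k l))"
  proof (rule sum.cong[OF refl])
    fix xs assume "xs \<in> ?S"
    then show "(\<Sum>uv\<in>?Sig. if uses_edge xs (fst uv) (snd uv) then 1 else 0) = real (2 * gdist V E k l)"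
      using edge_count[of xs k l] real_card_filter[OF finite_Sig, of "\<lambda>uv. uses_edge xs (fst uv) (snd uv)"]
      by simp
  qed
  also have "\<dots> = 2 * real (gdist V E k l) * real (num_sp V E k l)"
    by (simp add: num_sp_def)
  finally show ?thesis .
qed

lemma sum_exp_c:
  "(\<Sum>u\<in>V. exp_c lam V E u) = (\<Sum>p\<in>Pairs. real (gdist V E (fst p) (snd p)) * lam ^ gdist V E (fst p) (snd p))"
proof -
  define T where "T = (\<lambda>p u v. real (num_sp_edge V E (fst p) (snd p) u v) / real (num_sp V E (fst p) (snd p))
        * lam ^ gdist V E (fst p) (snd p))"
  have "(\<Sum>u\<in>V. exp_c lam V E u) = (\<Sum>u\<in>V. \<Sum>v\<in>neighbours V E u. (\<Sum>p\<in>Pairs. T p u v) / 2)"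
    unfolding exp_c_def exp_edge_betw_def T_def Pairs_def by (simp add: split_beta)
  also have "\<dots> = (\<Sum>u\<in>V. \<Sum>v\<in>neighbours V E u. \<Sum>p\<in>Pairs. T p u v) / 2"
    by (simp add: sum_divide_distrib)
  also have "(\<Sum>u\<in>V. \<Sum>v\<in>neighbours V E u. \<Sum>p\<in>Pairs. T p u v) = (\<Sum>u\<in>V. \<Sum>p\<in>Pairs. \<Sum>v\<in>neighbours V E u. T p u v)"
    by (rule sum.cong[OF refl], rule sum.swap)
  also have "\<dots> = (\<Sum>p\<in>Pairs. \<Sum>u\<in>V. \<Sum>v\<in>neighbours V E u. T p u v)"
    by (rule sum.swap)
  also have "\<dots> = (\<Sum>p\<in>Pairs. 2 * (real (gdist V E (fst p) (snd p)) * lam ^ gdist V E (fst p) (snd p)))"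
  proof (rule sum.cong[OF refl])
    fix p assume p: "p \<in> Pairs"
    then have V: "fst p \<in> V" "snd p \<in> V" by (auto simp: Pairs_def)
    have "(\<Sum>u\<in>V. \<Sum>v\<in>neighbours V E u. T p u v)
        = (\<Sum>u\<in>V. \<Sum>v\<in>neighbours V E u. real (num_sp_edge V E (fst p) (snd p) u v))
          / real (num_sp V E (fst p) (snd p)) * lam ^ gdist V E (fst p) (snd p)"
      unfolding T_def by (simp add: sum_divide_distrib sum_distrib_right)
    also have "\<dots> = 2 * (real (gdist V E (fst p) (snd p)) * lam ^ gdist V E (fst p) (snd p))"
      using sum_nse[OF V] num_sp_pos[OF V] by simp
    finally show "(\<Sum>u\<in>V. \<Sum>v\<in>neighbours V E u. T p u v) = 2 * (real (gdist V E (fst p) (snd p)) * lam ^ gdist V E (fst p) (snd p))" .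
  qed
  finally show ?thesis by (simp add: sum_distrib_left[symmetric])
qed

lemma sum_exp_t:
  "(\<Sum>u\<in>V. exp_t lam V E u) = (\<Sum>p\<in>Pairs. real (gdist V E (fst p) (snd p)) * lam ^ gdist V E (fst p) (snd p))"
proof -
  have "Sigma V (\<lambda>u. V - {u}) = Pairs" by (auto simp: Pairs_def)
  moreover have "(\<Sum>u\<in>V. exp_t lam V E u) = (\<Sum>p\<in>Sigma V (\<lambda>u. V - {u}). real (gdist V E (fst p) (snd p)) * lam ^ gdist V E (fst p) (snd p))"
    unfolding exp_t_def using finV by (simp add: sum.Sigma split_beta)
  ultimately show ?thesis by simp
qed

lemma sum_surplus: "(\<Sum>u\<in>V. surplus lam V E u) = 0"
  unfolding surplus_def by (simp add: sum_subtractf sum_exp_c sum_exp_t)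

end



context cgraph begin

lemma SP_len2:
  assumes "xs \<in> shortest_paths V E k l" "k \<noteq> l"
  shows "length xs \<ge> 2" "xs ! 0 = k" "xs ! (length xs - 1) = l"
proof -
  have w: "walk V E k l xs" and len: "length xs = Suc (gdist V E k l)" using SP_walk assms by auto
  have "k \<in> V" "l \<in> V" using walk_ends[OF w] by auto
  then have "gdist V E k l \<noteq> 0" using gdist_0 assms(2) by blast
  then show "length xs \<ge> 2" using len by simp
  show "xs ! 0 = k" using w by (metis hd_conv_nth walk_def)
  show "xs ! (length xs - 1) = l" using w by (metis last_conv_nth walk_def)
qed

lemma nse_le: "num_sp_edge V E k l u v \<le> num_sp V E k l"
  unfolding num_sp_edge_def num_sp_def using SP_finite by (intro card_mono) auto

lemma nse_ge_start:
  assumes "l \<in> V" "l \<noteq> u"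
  shows "(\<Sum>v\<in>neighbours V E u. num_sp_edge V E u l u v) \<ge> num_sp V E u l"
proof -
  have "shortest_paths V E u l \<subseteq> (\<Union>v\<in>neighbours V E u. {xs \<in> shortest_paths V E u l. uses_edge xs u v})"
  proof
    fix xs assume xs: "xs \<in> shortest_paths V E u l"
    note L = SP_len2[OF xs assms(2)[symmetric]]
    have w: "walk V E u l xs" using SP_walk xs by auto
    have E: "E (xs!0) (xs!1)" using w L(1) by (simp add: walk_def)
    then have "xs!1 \<in> neighbours V E u" using L(2) Ein by (auto simp: neighbours_def)
    moreover have "uses_edge xs u (xs!1)" unfolding uses_edge_def using L
      by (intro exI[of _ 0]) auto
    ultimately show "xs \<in> (\<Union>v\<in>neighbours V E u. {xs \<in> shortest_paths V E u l. uses_edge xs u v})"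
      using xs by blast
  qed
  then have "num_sp V E u l \<le> card (\<Union>v\<in>neighbours V E u. {xs \<in> shortest_paths V E u l. uses_edge xs u v})"
    unfolding num_sp_def by (rule card_mono[rotated]) (use finite_nbr SP_finite in auto)
  also have "\<dots> \<le> (\<Sum>v\<in>neighbours V E u. num_sp_edge V E u l u v)"
    unfolding num_sp_edge_def using finite_nbr by (rule card_UN_le)
  finally show ?thesis .
qed

lemma nse_ge_end:
  assumes "k \<in> V" "k \<noteq> u"
  shows "(\<Sum>v\<in>neighbours V E u. num_sp_edge V E k u u v) \<ge> num_sp V E k u"
proof -
  have "shortest_paths V E k u \<subseteq> (\<Union>v\<in>neighbours V E u. {xs \<in> shortest_paths V E k u. uses_edge xs u v})"
  proof
    fix xs assume xs: "xs \<in> shortest_paths V E k u"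
    note L = SP_len2[OF xs assms(2)]
    define j where "j = length xs - 2"
    have j: "Suc j < length xs" "Suc j = length xs - 1" using L(1) by (auto simp: j_def)
    have w: "walk V E k u xs" using SP_walk xs by auto
    have E: "E (xs!j) (xs!Suc j)" using w j unfolding walk_def by blast
    then have "xs!j \<in> neighbours V E u" using L(3) j Ein Esym by (auto simp: neighbours_def)
    moreover have "uses_edge xs u (xs!j)" unfolding uses_edge_def using L j
      by (intro exI[of _ j]) auto
    ultimately show "xs \<in> (\<Union>v\<in>neighbours V E u. {xs \<in> shortest_paths V E k u. uses_edge xs u v})"
      using xs by blast
  qed
  then have "num_sp V E k u \<le> card (\<Union>v\<in>neighbours V E u. {xs \<in> shortest_paths V E k u. uses_edge xs u v})"
    unfolding num_sp_def by (rule card_mono[rotated]) (use finite_nbr SP_finite in auto)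
  also have "\<dots> \<le> (\<Sum>v\<in>neighbours V E u. num_sp_edge V E k u u v)"
    unfolding num_sp_edge_def using finite_nbr by (rule card_UN_le)
  finally show ?thesis .
qed

lemma nse_zero_leaf:
  assumes N: "neighbours V E u = {w}" and k: "k \<noteq> u" and l: "l \<noteq> u"
  shows "num_sp_edge V E k l u w = 0"
proof -
  have "{xs \<in> shortest_paths V E k l. uses_edge xs u w} = {}"
  proof (rule ccontr)
    assume "{xs \<in> shortest_paths V E k l. uses_edge xs u w} \<noteq> {}"
    then obtain xs i where xs: "xs \<in> shortest_paths V E k l" and i: "Suc i < length xs"
      "{xs ! i, xs ! Suc i} = {u, w}" by (auto simp: uses_edge_def)
    have w: "walk V E k l xs" using SP_walk xs by auto
    have hd: "xs ! 0 = k" using w by (metis hd_conv_nth walk_def)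
    have lt: "xs ! (length xs - 1) = l" using w by (metis last_conv_nth walk_def)
    obtain j where j: "j < length xs" "xs ! j = u" using i by (metis Suc_lessD doubleton_eq_iff)
    have j0: "0 < j" using j hd k by (cases j) auto
    have j1: "Suc j < length xs" using j lt l
      by (metis Suc_lessI diff_Suc_1)
    have jj: "Suc (j-1) < length xs" "Suc (j-1) = j" using j0 j by auto
    have "E (xs ! (j - 1)) (xs ! j)" using w jj unfolding walk_def by metis
    then have a: "xs ! (j - 1) = w" using N j Esym Ein by (auto simp: neighbours_def)
    have "E (xs ! j) (xs ! Suc j)" using w j1 by (simp add: walk_def)
    then have b: "xs ! Suc j = w" using N j Ein by (auto simp: neighbours_def)
    have "distinct xs" using SP_distinct[OF xs] .
    then have "j - 1 = Suc j" using a b j1 nth_eq_iff_index_eq[of xs "j-1" "Suc j"] by simp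
    then show False by simp
  qed
  then show ?thesis unfolding num_sp_edge_def by (metis card.empty)
qed

definition "Fc lam u p = (\<Sum>v\<in>neighbours V E u. real (num_sp_edge V E (fst p) (snd p) u v) /
        real (num_sp V E (fst p) (snd p)) * lam ^ gdist V E (fst p) (snd p))"

lemma exp_c_Fc: "exp_c lam V E u = (\<Sum>p\<in>Pairs. Fc lam u p) / 2"
proof -
  have "exp_c lam V E u = (\<Sum>v\<in>neighbours V E u. (\<Sum>p\<in>Pairs. real (num_sp_edge V E (fst p) (snd p) u v) /
        real (num_sp V E (fst p) (snd p)) * lam ^ gdist V E (fst p) (snd p)) / 2)"
    unfolding exp_c_def exp_edge_betw_def Pairs_def by (simp add: split_beta)
  also have "\<dots> = (\<Sum>v\<in>neighbours V E u. \<Sum>p\<in>Pairs. real (num_sp_edge V E (fst p) (snd p) u v) /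
        real (num_sp V E (fst p) (snd p)) * lam ^ gdist V E (fst p) (snd p)) / 2"
    by (rule sum_divide_distrib[symmetric])
  also have "\<dots> = (\<Sum>p\<in>Pairs. Fc lam u p) / 2"
    unfolding Fc_def by (subst sum.swap) (rule refl)
  finally show ?thesis .
qed

lemma Fc_alt: "Fc lam u p = (\<Sum>v\<in>neighbours V E u. real (num_sp_edge V E (fst p) (snd p) u v)) /
        real (num_sp V E (fst p) (snd p)) * lam ^ gdist V E (fst p) (snd p)"
  unfolding Fc_def by (simp add: sum_divide_distrib sum_distrib_right)

lemma Fc_nonneg: "lam \<ge> 0 \<Longrightarrow> Fc lam u p \<ge> 0"
  unfolding Fc_def by (intro sum_nonneg) auto

lemma Fc_start:
  assumes "lam \<ge> 0" "u \<in> V" "l \<in> V" "l \<noteq> u"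
  shows "Fc lam u (u,l) \<ge> lam ^ gdist V E u l"
proof -
  have "real (num_sp V E u l) \<le> (\<Sum>v\<in>neighbours V E u. real (num_sp_edge V E u l u v))"
    using nse_ge_start[OF assms(3,4)] by (metis of_nat_le_iff of_nat_sum)
  moreover have "real (num_sp V E u l) > 0" using num_sp_pos assms by simp
  ultimately have "(\<Sum>v\<in>neighbours V E u. real (num_sp_edge V E u l u v)) / real (num_sp V E u l) \<ge> 1"
    by simp
  then have "1 * lam ^ gdist V E u l \<le> (\<Sum>v\<in>neighbours V E u. real (num_sp_edge V E u l u v)) / real (num_sp V E u l) * lam ^ gdist V E u l"
    using assms(1) by (intro mult_right_mono) auto
  then show ?thesis unfolding Fc_alt by simp
qed

lemma Fc_end:
  assumes "lam \<ge> 0" "u \<in> V" "k \<in> V" "k \<noteq> u"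
  shows "Fc lam u (k,u) \<ge> lam ^ gdist V E u k"
proof -
  have "real (num_sp V E k u) \<le> (\<Sum>v\<in>neighbours V E u. real (num_sp_edge V E k u u v))"
    using nse_ge_end[OF assms(3,4)] by (metis of_nat_le_iff of_nat_sum)
  moreover have "real (num_sp V E k u) > 0" using num_sp_pos assms by simp
  ultimately have "(\<Sum>v\<in>neighbours V E u. real (num_sp_edge V E k u u v)) / real (num_sp V E k u) \<ge> 1"
    by simp
  then have "1 * lam ^ gdist V E k u \<le> (\<Sum>v\<in>neighbours V E u. real (num_sp_edge V E k u u v)) / real (num_sp V E k u) * lam ^ gdist V E k u"
    using assms(1) by (intro mult_right_mono) auto
  then show ?thesis unfolding Fc_alt using gdist_sym[OF assms(2,3)] by simp
qed

end



context cgraph begin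

lemma Fc_le_leaf:
  assumes N: "neighbours V E u = {w}" and "lam \<ge> 0" "k \<in> V" "l \<in> V"
  shows "Fc lam u (k,l) \<le> lam ^ gdist V E k l"
proof -
  have "real (num_sp_edge V E k l u w) \<le> real (num_sp V E k l)" using nse_le by simp
  moreover have "real (num_sp V E k l) > 0" using num_sp_pos assms by simp
  ultimately have r: "real (num_sp_edge V E k l u w) / real (num_sp V E k l) \<le> 1" by simp
  have "real (num_sp_edge V E k l u w) / real (num_sp V E k l) * lam ^ gdist V E k l \<le> 1 * lam ^ gdist V E k l"
    using assms(2) by (intro mult_right_mono[OF r]) auto
  then show ?thesis unfolding Fc_alt N by simp
qed

lemma Fc_rest_zero:
  assumes N: "neighbours V E u = {w}" and "k \<noteq> u" "l \<noteq> u"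
  shows "Fc lam u (k,l) = 0"
  unfolding Fc_alt N using nse_zero_leaf[OF N assms(2,3)] by simp

lemma exp_c_split:
  assumes "u \<in> V"
  defines "A \<equiv> (\<lambda>l. (u,l)) ` (V - {u})" and "B \<equiv> (\<lambda>k. (k,u)) ` (V - {u})"
  shows "exp_c lam V E u = ((\<Sum>l\<in>V-{u}. Fc lam u (u,l)) + (\<Sum>k\<in>V-{u}. Fc lam u (k,u))
             + (\<Sum>p\<in>Pairs - (A \<union> B). Fc lam u p)) / 2"
proof -
  have sub: "A \<union> B \<subseteq> Pairs" using assms by (auto simp: Pairs_def A_def B_def)
  have dis: "A \<inter> B = {}" by (auto simp: A_def B_def)
  have fA: "finite A" "finite B" using finV by (auto simp: A_def B_def)
  have "(\<Sum>p\<in>Pairs. Fc lam u p) = (\<Sum>p\<in>Pairs - (A \<union> B). Fc lam u p) + (\<Sum>p\<in>A \<union> B. Fc lam u p)"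
    using sum.subset_diff[OF sub finite_Pairs] .
  also have "(\<Sum>p\<in>A \<union> B. Fc lam u p) = (\<Sum>p\<in>A. Fc lam u p) + (\<Sum>p\<in>B. Fc lam u p)"
    using sum.union_disjoint[OF fA dis] .
  also have "(\<Sum>p\<in>A. Fc lam u p) = (\<Sum>l\<in>V-{u}. Fc lam u (u,l))"
    unfolding A_def by (subst sum.reindex) (auto simp: inj_on_def)
  also have "(\<Sum>p\<in>B. Fc lam u p) = (\<Sum>k\<in>V-{u}. Fc lam u (k,u))"
    unfolding B_def by (subst sum.reindex) (auto simp: inj_on_def)
  finally show ?thesis unfolding exp_c_Fc by simp
qed

lemma exp_c_ge:
  assumes "u \<in> V" "lam \<ge> 0"
  shows "exp_c lam V E u \<ge> (\<Sum>l\<in>V-{u}. lam ^ gdist V E u l)"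
proof -
  have a: "(\<Sum>l\<in>V-{u}. Fc lam u (u,l)) \<ge> (\<Sum>l\<in>V-{u}. lam ^ gdist V E u l)"
    using Fc_start assms by (intro sum_mono) auto
  have b: "(\<Sum>k\<in>V-{u}. Fc lam u (k,u)) \<ge> (\<Sum>l\<in>V-{u}. lam ^ gdist V E u l)"
    using Fc_end assms by (intro sum_mono) auto
  have c: "(\<Sum>p\<in>Pairs - ((\<lambda>l. (u,l)) ` (V - {u}) \<union> (\<lambda>k. (k,u)) ` (V - {u})). Fc lam u p) \<ge> 0"
    using Fc_nonneg assms by (intro sum_nonneg) auto
  define X where "X = (\<Sum>l\<in>V-{u}. Fc lam u (u,l))"
  define Y where "Y = (\<Sum>k\<in>V-{u}. Fc lam u (k,u))"
  define Z where "Z = (\<Sum>p\<in>Pairs - ((\<lambda>l. (u,l)) ` (V - {u}) \<union> (\<lambda>k. (k,u)) ` (V - {u})). Fc lam u p)"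
  define S where "S = (\<Sum>l\<in>V-{u}. lam ^ gdist V E u l)"
  have 1: "S \<le> X" unfolding S_def X_def by (rule a)
  have 2: "S \<le> Y" unfolding S_def Y_def by (rule b)
  have 3: "0 \<le> Z" unfolding Z_def by (rule c)
  have "S \<le> (X + Y + Z) / 2" using 1 2 3 by (simp add: field_simps)
  then show ?thesis unfolding exp_c_split[OF assms(1)] X_def Y_def Z_def S_def .
qed

lemma exp_c_leaf:
  assumes "u \<in> V" "lam \<ge> 0" and N: "neighbours V E u = {w}"
  shows "exp_c lam V E u = (\<Sum>l\<in>V-{u}. lam ^ gdist V E u l)"
proof -
  have a: "(\<Sum>l\<in>V-{u}. Fc lam u (u,l)) = (\<Sum>l\<in>V-{u}. lam ^ gdist V E u l)"
    using Fc_start Fc_le_leaf[OF N] assms by (intro sum.cong refl antisym) auto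
  have b: "(\<Sum>k\<in>V-{u}. Fc lam u (k,u)) = (\<Sum>l\<in>V-{u}. lam ^ gdist V E u l)"
  proof (intro sum.cong refl antisym)
    fix k assume k: "k \<in> V - {u}"
    show "Fc lam u (k, u) \<le> lam ^ gdist V E u k"
      using Fc_le_leaf[OF N assms(2), of k u] gdist_sym[of u k] k assms by auto
    show "lam ^ gdist V E u k \<le> Fc lam u (k, u)" using Fc_end k assms by auto
  qed
  have c: "(\<Sum>p\<in>Pairs - ((\<lambda>l. (u,l)) ` (V - {u}) \<union> (\<lambda>k. (k,u)) ` (V - {u})). Fc lam u p) = 0"
  proof (intro sum.neutral ballI)
    fix p assume p: "p \<in> Pairs - ((\<lambda>l. (u,l)) ` (V - {u}) \<union> (\<lambda>k. (k,u)) ` (V - {u}))"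
    obtain k l where [simp]: "p = (k,l)" by (cases p)
    have "k \<noteq> u" "l \<noteq> u" using p by (auto simp: Pairs_def)
    then show "Fc lam u p = 0" using Fc_rest_zero[OF N] by simp
  qed
  show ?thesis unfolding exp_c_split[OF assms(1)] a b c by simp
qed

lemma surplus_ge:
  assumes "u \<in> V" "lam \<ge> 0"
  shows "surplus lam V E u \<ge> (\<Sum>l\<in>V-{u}. (1 - real (gdist V E u l)) * lam ^ gdist V E u l)"
  using exp_c_ge[OF assms] unfolding surplus_def exp_t_def
  by (simp add: left_diff_distrib sum_subtractf)

lemma surplus_leaf:
  assumes "u \<in> V" "lam \<ge> 0" "neighbours V E u = {w}"
  shows "surplus lam V E u = (\<Sum>l\<in>V-{u}. (1 - real (gdist V E u l)) * lam ^ gdist V E u l)"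
  using exp_c_leaf[OF assms] unfolding surplus_def exp_t_def
  by (simp add: left_diff_distrib sum_subtractf)

end



lemma comb_bound:
  fixes h :: "'b \<Rightarrow> nat" and f :: "nat \<Rightarrow> real"
  assumes fin: "finite A" and ne: "A \<noteq> {}" and pos: "\<forall>a\<in>A. h a \<ge> 1"
    and dc: "\<forall>a\<in>A. \<forall>d. 1 \<le> d \<and> d \<le> h a \<longrightarrow> d \<in> h ` A"
  shows "\<exists>m\<in>{1..card A}. (\<Sum>a\<in>A. f (h a)) \<ge> (\<Sum>d=1..m. f d) + (real (card A) - real m) * f m"
proof -
  define e where "e = Max (h ` A)"
  have fi: "finite (h ` A)" using fin by simp
  have img: "h ` A = {1..e}"
  proof (intro equalityI subsetI)
    fix d assume "d \<in> h ` A"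
    then show "d \<in> {1..e}" using pos fi e_def by auto
  next
    fix d assume d: "d \<in> {1..e}"
    have "e \<in> h ` A" using e_def fi ne by (simp add: Max_in)
    then obtain a where "a \<in> A" "h a = e" by auto
    then show "d \<in> h ` A" using dc d by auto
  qed
  have e1: "e \<ge> 1" using img ne by (metis atLeastAtMost_iff empty_is_image equals0I le_trans nle_le not_one_le_zero)
  have ecard: "e \<le> card A" using card_image_le[OF fin, of h] img by simp
  define M where "M = Min (f ` {1..e})"
  have "M \<in> f ` {1..e}" unfolding M_def using e1 by (intro Min_in) auto
  then obtain m where m: "m \<in> {1..e}" "f m = M" by auto
  have mmin: "\<And>d. d \<in> {1..e} \<Longrightarrow> f m \<le> f d" using m unfolding M_def by simp
  define c where "c = (\<lambda>d. real (card {a \<in> A. h a = d}))"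
  have c1: "\<And>d. d \<in> {1..e} \<Longrightarrow> c d \<ge> 1"
  proof -
    fix d assume "d \<in> {1..e}"
    then obtain a where "a \<in> A" "h a = d" using img by (metis imageE)
    then have "{a \<in> A. h a = d} \<noteq> {}" by auto
    then show "c d \<ge> 1" unfolding c_def using fin by (simp add: Suc_leI card_gt_0_iff)
  qed
  have s1: "(\<Sum>a\<in>A. f (h a)) = (\<Sum>d\<in>{1..e}. c d * f d)"
  proof -
    have "(\<Sum>a\<in>A. f (h a)) = (\<Sum>d\<in>h ` A. \<Sum>a\<in>{a \<in> A. h a = d}. f (h a))"
      using sum.image_gen[OF fin] .
    also have "\<dots> = (\<Sum>d\<in>h ` A. c d * f d)"
      by (rule sum.cong[OF refl]) (simp add: c_def)
    finally show ?thesis using img by simp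
  qed
  have s2: "(\<Sum>d\<in>{1..e}. c d) = real (card A)"
  proof -
    have "real (card A) = (\<Sum>a\<in>A. 1)" by simp
    also have "\<dots> = (\<Sum>d\<in>h ` A. \<Sum>a\<in>{a \<in> A. h a = d}. 1)"
      using sum.image_gen[OF fin] .
    also have "\<dots> = (\<Sum>d\<in>h ` A. c d)"
      by (rule sum.cong[OF refl]) (simp add: c_def)
    finally show ?thesis using img by simp
  qed
  have q1: "(\<Sum>d\<in>{1..e}. c d * f d) = (\<Sum>d\<in>{1..e}. f d) + (\<Sum>d\<in>{1..e}. (c d - 1) * f d)"
    by (simp add: sum.distrib[symmetric] algebra_simps)
  have q2: "(\<Sum>d\<in>{1..e}. (c d - 1) * f d) \<ge> (\<Sum>d\<in>{1..e}. (c d - 1) * f m)"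
    using c1 mmin by (intro sum_mono mult_left_mono) auto
  have q3: "(\<Sum>d\<in>{1..e}. (c d - 1) * f m) = (real (card A) - real e) * f m"
    using s2 by (simp add: sum_distrib_right[symmetric] sum_subtractf)
  have t1: "(\<Sum>a\<in>A. f (h a)) \<ge> (\<Sum>d\<in>{1..e}. f d) + (real (card A) - real e) * f m"
    using s1 q1 q2 q3 by linarith
  have sub: "{1..m} \<subseteq> {1..e}" using m by auto
  have "(\<Sum>d\<in>{1..e}. f d) = (\<Sum>d\<in>{1..e} - {1..m}. f d) + (\<Sum>d\<in>{1..m}. f d)"
    using sum.subset_diff[OF sub] by simp
  moreover have "(\<Sum>d\<in>{1..e} - {1..m}. f d) \<ge> real (card ({1..e} - {1..m})) * f m"
    using mmin by (intro sum_bounded_below) auto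
  moreover have "card ({1..e} - {1..m}) = e - m" using sub by (simp add: card_Diff_subset)
  ultimately have t2: "(\<Sum>d\<in>{1..e}. f d) \<ge> (\<Sum>d\<in>{1..m}. f d) + (real e - real m) * f m"
    using m by (simp add: of_nat_diff)
  have "(\<Sum>a\<in>A. f (h a)) \<ge> (\<Sum>d=1..m. f d) + (real (card A) - real m) * f m"
    using t1 t2 by (simp add: algebra_simps)
  moreover have "m \<in> {1..card A}" using m ecard by auto
  ultimately show ?thesis by blast
qed




lemma closed_aux:
  fixes lam :: real
  shows "(lam - 1)^2 * (\<Sum>d=1..D. (1 - real d) * lam^d) = lam * (real D * lam^D - lam - (real D - 1)*lam^(D+1))"
proof (induction D)
  case 0 then show ?case by simp
next
  case (Suc D)
  have "(\<Sum>d=1..Suc D. (1 - real d) * lam^d) = (\<Sum>d=1..D. (1 - real d) * lam^d) + (1 - real (Suc D)) * lam^Suc D"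
    by simp
  then have "(lam - 1)^2 * (\<Sum>d=1..Suc D. (1 - real d) * lam^d) = (lam - 1)^2 * (\<Sum>d=1..D. (1 - real d) * lam^d) + (lam - 1)^2 * ((1 - real (Suc D)) * lam^Suc D)"
    by (simp only: distrib_left)
  also have "\<dots> = lam * (real D * lam^D - lam - (real D - 1)*lam^(D+1)) + (lam - 1)^2 * ((1 - real (Suc D)) * lam^Suc D)"
    by (subst Suc.IH) (rule refl)
  also have "\<dots> = lam * (real (Suc D) * lam^Suc D - lam - (real (Suc D) - 1)*lam^(Suc D+1))"
    by (simp add: algebra_simps power2_eq_square)
  finally show ?case .
qed

definition gg :: "real \<Rightarrow> nat \<Rightarrow> real" where "gg lam d = (1 - real d) * lam ^ d"

lemma lbe_alt:
  assumes "lam \<noteq> 1"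
  shows "lower_bound_expr lam n D = (\<Sum>d=1..D. gg lam d) + (real n - real D - 1) * gg lam D"
proof -
  have "(lam - 1)^2 \<noteq> 0" using assms by simp
  then have "(\<Sum>d=1..D. gg lam d) = lam * (real D * lam^D - lam - (real D - 1)*lam^(D+1)) / (lam - 1)^2"
    using closed_aux[of lam D] unfolding gg_def by (simp add: field_simps)
  then show ?thesis unfolding lower_bound_expr_def gg_def by (simp add: algebra_simps)
qed

context cgraph begin

lemma profile:
  assumes u: "u \<in> V" and v: "v \<in> V - {u}" and d: "1 \<le> d" "d \<le> gdist V E u v"
  shows "d \<in> gdist V E u ` (V - {u})"
proof -
  obtain xs where xs: "walk V E u v xs" "length xs = Suc (gdist V E u v)" using gdist_ex u v by blast
  then have sp: "xs \<in> shortest_paths V E u v" by (simp add: shortest_paths_def)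
  have dl: "d < length xs" using xs d by simp
  have g: "gdist V E u (xs ! d) = d" using SP_nth[OF sp dl] .
  have inV: "xs ! d \<in> V" using xs(1) dl by (auto simp: walk_def)
  have "xs ! d \<noteq> u" using g d gdist_0[OF u u] by auto
  then show ?thesis using g inV by force
qed

lemma surplus_lb:
  assumes u: "u \<in> V" and lam: "0 < lam" "lam < 1" and n: "card V = n" "n \<ge> 2"
  shows "Min (lower_bound_expr lam n ` {1..n-1}) \<le> surplus lam V E u"
proof -
  let ?A = "V - {u}"
  let ?h = "gdist V E u"
  have cA: "card ?A = n - 1" using n u finV by simp
  have ne: "?A \<noteq> {}"
  proof
    assume "?A = {}" then have "card ?A = 0" by (simp only: card.empty)
    with cA n show False by simp
  qed
  have pos: "\<forall>a\<in>?A. ?h a \<ge> 1" using gdist_0 u by (auto simp: Suc_le_eq)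
  have dc: "\<forall>a\<in>?A. \<forall>d. 1 \<le> d \<and> d \<le> ?h a \<longrightarrow> d \<in> ?h ` ?A" using profile u by blast
  obtain m where m: "m \<in> {1..card ?A}"
    "(\<Sum>a\<in>?A. gg lam (?h a)) \<ge> (\<Sum>d=1..m. gg lam d) + (real (card ?A) - real m) * gg lam m"
    using comb_bound[OF _ ne pos dc, of "gg lam"] finV by blast
  have "real (card ?A) - real m = real n - real m - 1" using cA n by simp
  then have "(real (card ?A) - real m) * gg lam m = (real n - real m - 1) * gg lam m" by simp
  then have "lower_bound_expr lam n m \<le> (\<Sum>a\<in>?A. gg lam (?h a))"
    using m(2) lbe_alt[of lam n m] lam by linarith
  also have "\<dots> \<le> surplus lam V E u" using surplus_ge[OF u] lam unfolding gg_def by simp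
  finally have "lower_bound_expr lam n m \<le> surplus lam V E u" .
  moreover have "Min (lower_bound_expr lam n ` {1..n-1}) \<le> lower_bound_expr lam n m"
    using m(1) cA by (intro Min_le) auto
  ultimately show ?thesis by linarith
qed

lemma min_surplus_in: "V \<noteq> {} \<Longrightarrow> \<exists>u\<in>V. min_surplus lam V E = surplus lam V E u"
proof -
  assume "V \<noteq> {}"
  then have "Min (surplus lam V E ` V) \<in> surplus lam V E ` V" using finV by (intro Min_in) auto
  then show ?thesis unfolding min_surplus_def by auto
qed

lemma min_surplus_le: "u \<in> V \<Longrightarrow> min_surplus lam V E \<le> surplus lam V E u"
  unfolding min_surplus_def using finV by (intro Min_le) auto

lemma min_surplus_lb:
  assumes "0 < lam" "lam < 1" "card V = n" "n \<ge> 2"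
  shows "Min (lower_bound_expr lam n ` {1..n-1}) \<le> min_surplus lam V E"
proof -
  have "V \<noteq> {}" using assms by auto
  then obtain u where "u \<in> V" "min_surplus lam V E = surplus lam V E u" using min_surplus_in by blast
  then show ?thesis using surplus_lb assms by simp
qed

lemma min_surplus_nonpos:
  assumes "V \<noteq> {}"
  shows "min_surplus lam V E \<le> 0"
proof -
  have "(\<Sum>u\<in>V. min_surplus lam V E) \<le> (\<Sum>u\<in>V. surplus lam V E u)"
    using min_surplus_le by (intro sum_mono) auto
  then have "real (card V) * min_surplus lam V E \<le> 0" using sum_surplus by simp
  moreover have "card V > 0" using assms finV by (simp add: card_gt_0_iff)
  ultimately show ?thesis by (simp add: mult_le_0_iff)
qed

end



context cgraph begin

definition "aut f \<longleftrightarrow> bij_betw f V V \<and> (\<forall>x\<in>V. \<forall>y\<in>V. E x y \<longleftrightarrow> E (f x) (f y))"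

lemma aut_inj: "aut f \<Longrightarrow> inj_on f V" by (simp add: aut_def bij_betw_def)
lemma aut_img: "aut f \<Longrightarrow> f ` V = V" by (simp add: aut_def bij_betw_def)
lemma aut_in: "aut f \<Longrightarrow> x \<in> V \<Longrightarrow> f x \<in> V" using aut_img by blast

lemma aut_inv:
  assumes "aut f"
  shows "aut (inv_into V f)" "\<And>x. x \<in> V \<Longrightarrow> inv_into V f (f x) = x"
    "\<And>y. y \<in> V \<Longrightarrow> f (inv_into V f y) = y"
proof -
  have b: "bij_betw f V V" using assms by (simp add: aut_def)
  show i1: "\<And>x. x \<in> V \<Longrightarrow> inv_into V f (f x) = x" using aut_inj[OF assms] by (simp add: inv_into_f_f)
  show i2: "\<And>y. y \<in> V \<Longrightarrow> f (inv_into V f y) = y" using aut_img[OF assms] by (metis f_inv_into_f)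
  have bi: "bij_betw (inv_into V f) V V" using bij_betw_inv_into[OF b] .
  have "\<forall>x\<in>V. \<forall>y\<in>V. E x y \<longleftrightarrow> E (inv_into V f x) (inv_into V f y)"
  proof (intro ballI)
    fix x y assume xy: "x \<in> V" "y \<in> V"
    have "inv_into V f x \<in> V" "inv_into V f y \<in> V" using bi xy by (auto simp: bij_betw_def)
    then have "E (inv_into V f x) (inv_into V f y) \<longleftrightarrow> E (f (inv_into V f x)) (f (inv_into V f y))"
      using assms by (simp add: aut_def)
    then show "E x y \<longleftrightarrow> E (inv_into V f x) (inv_into V f y)" using i2 xy by simp
  qed
  then show "aut (inv_into V f)" using bi by (simp add: aut_def)
qed

lemma aut_walk:
  assumes f: "aut f" and w: "walk V E u v xs"
  shows "walk V E (f u) (f v) (map f xs)"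
  unfolding walk_def
proof (intro conjI allI impI)
  have s: "set xs \<subseteq> V" using w by (simp add: walk_def)
  show "map f xs \<noteq> []" using w by (simp add: walk_def)
  show "set (map f xs) \<subseteq> V" using s aut_in[OF f] by auto
  show "hd (map f xs) = f u" using w by (simp add: walk_def hd_map)
  show "last (map f xs) = f v" using w by (simp add: walk_def last_map)
  fix i assume i: "Suc i < length (map f xs)"
  then have "E (xs!i) (xs!Suc i)" "xs!i \<in> V" "xs!Suc i \<in> V" using w s by (auto simp: walk_def)
  then show "E (map f xs ! i) (map f xs ! Suc i)" using f i by (simp add: aut_def)
qed

lemma aut_gdist_le:
  assumes f: "aut f" and "u \<in> V" "v \<in> V"
  shows "gdist V E (f u) (f v) \<le> gdist V E u v"
proof -
  obtain xs where xs: "walk V E u v xs" "length xs = Suc (gdist V E u v)" using gdist_ex assms by blast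
  show ?thesis using gdist_le[OF aut_walk[OF f xs(1)]] xs by simp
qed

lemma aut_gdist:
  assumes f: "aut f" and "u \<in> V" "v \<in> V"
  shows "gdist V E (f u) (f v) = gdist V E u v"
proof -
  let ?g = "inv_into V f"
  have "gdist V E (?g (f u)) (?g (f v)) \<le> gdist V E (f u) (f v)"
    using aut_gdist_le[OF aut_inv(1)[OF f]] aut_in[OF f] assms by simp
  then show ?thesis using aut_gdist_le[OF assms] aut_inv(2)[OF f] assms by simp
qed

lemma aut_SP_sub:
  assumes f: "aut f" and "k \<in> V" "l \<in> V"
  shows "map f ` shortest_paths V E k l \<subseteq> shortest_paths V E (f k) (f l)"
  using aut_walk[OF f] aut_gdist[OF assms] by (auto simp: shortest_paths_def)

lemma map_inv:
  assumes f: "aut f" and "set xs \<subseteq> V"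
  shows "map (inv_into V f) (map f xs) = xs" "map f (map (inv_into V f) xs) = xs"
proof -
  have a: "\<forall>x\<in>set xs. inv_into V f (f x) = x" using assms(2) aut_inv(2)[OF f] by blast
  have b: "\<forall>x\<in>set xs. f (inv_into V f x) = x" using assms(2) aut_inv(3)[OF f] by blast
  show "map (inv_into V f) (map f xs) = xs" unfolding map_map comp_def by (rule map_idI) (use a in blast)
  show "map f (map (inv_into V f) xs) = xs" unfolding map_map comp_def by (rule map_idI) (use b in blast)
qed

lemma SP_set: "xs \<in> shortest_paths V E k l \<Longrightarrow> set xs \<subseteq> V"
  by (simp add: shortest_paths_def walk_def)

lemma aut_SP:
  assumes f: "aut f" and kl: "k \<in> V" "l \<in> V"
  shows "map f ` shortest_paths V E k l = shortest_paths V E (f k) (f l)"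
proof
  show "map f ` shortest_paths V E k l \<subseteq> shortest_paths V E (f k) (f l)" using aut_SP_sub assms .
  show "shortest_paths V E (f k) (f l) \<subseteq> map f ` shortest_paths V E k l"
  proof
    fix ys assume ys: "ys \<in> shortest_paths V E (f k) (f l)"
    let ?g = "inv_into V f"
    have "map ?g ys \<in> shortest_paths V E (?g (f k)) (?g (f l))"
      using aut_SP_sub[OF aut_inv(1)[OF f], of "f k" "f l"] aut_in[OF f] kl ys by auto
    then have "map ?g ys \<in> shortest_paths V E k l" using aut_inv(2)[OF f] kl by simp
    moreover have "map f (map ?g ys) = ys" using map_inv[OF f SP_set[OF ys]] by simp
    ultimately show "ys \<in> map f ` shortest_paths V E k l" by force
  qed
qed

lemma aut_inj_map: "aut f \<Longrightarrow> inj_on (map f) (shortest_paths V E k l)"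
proof (rule inj_onI)
  fix xs ys assume f: "aut f" and xs: "xs \<in> shortest_paths V E k l" and ys: "ys \<in> shortest_paths V E k l"
    and eq: "map f xs = map f ys"
  have "xs = map (inv_into V f) (map f xs)" using map_inv(1)[OF f SP_set[OF xs]] by simp
  also have "\<dots> = map (inv_into V f) (map f ys)" using eq by simp
  also have "\<dots> = ys" using map_inv(1)[OF f SP_set[OF ys]] .
  finally show "xs = ys" .
qed

lemma aut_num_sp:
  assumes f: "aut f" and "k \<in> V" "l \<in> V"
  shows "num_sp V E (f k) (f l) = num_sp V E k l"
  unfolding num_sp_def aut_SP[OF assms, symmetric] using card_image[OF aut_inj_map[OF f]] .

lemma aut_uses_edge:
  assumes f: "aut f" and s: "set xs \<subseteq> V" and uv: "u \<in> V" "v \<in> V"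
  shows "uses_edge (map f xs) (f u) (f v) \<longleftrightarrow> uses_edge xs u v"
proof -
  have "\<And>i. Suc i < length xs \<Longrightarrow> ({f (xs!i), f (xs!Suc i)} = {f u, f v} \<longleftrightarrow> {xs!i, xs!Suc i} = {u, v})"
  proof -
    fix i assume i: "Suc i < length xs"
    then have "xs!i \<in> V" "xs!Suc i \<in> V" using s by auto
    then have "f ` {xs!i, xs!Suc i} = f ` {u, v} \<longleftrightarrow> {xs!i, xs!Suc i} = {u, v}"
      using uv aut_inj[OF f] by (intro inj_on_image_eq_iff) auto
    then show "{f (xs!i), f (xs!Suc i)} = {f u, f v} \<longleftrightarrow> {xs!i, xs!Suc i} = {u, v}" by simp
  qed
  then have "\<forall>i. Suc i < length xs \<longrightarrow> ({map f xs ! i, map f xs ! Suc i} = {f u, f v} \<longleftrightarrow> {xs!i, xs!Suc i} = {u, v})"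
    by (simp add: Suc_lessD)
  then show ?thesis unfolding uses_edge_def by (metis length_map)
qed

lemma aut_nse:
  assumes f: "aut f" and kl: "k \<in> V" "l \<in> V" and uv: "u \<in> V" "v \<in> V"
  shows "num_sp_edge V E (f k) (f l) (f u) (f v) = num_sp_edge V E k l u v"
proof -
  have seteq: "{ys \<in> shortest_paths V E (f k) (f l). uses_edge ys (f u) (f v)}
      = map f ` {xs \<in> shortest_paths V E k l. uses_edge xs u v}"
    unfolding aut_SP[OF f kl, symmetric]
  proof (intro equalityI subsetI)
    fix ys assume "ys \<in> {ys \<in> map f ` shortest_paths V E k l. uses_edge ys (f u) (f v)}"
    then obtain xs where xs: "xs \<in> shortest_paths V E k l" "ys = map f xs" "uses_edge (map f xs) (f u) (f v)"
      by blast
    then have "uses_edge xs u v" using aut_uses_edge[OF f SP_set[OF xs(1)] uv] by simp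
    then show "ys \<in> map f ` {xs \<in> shortest_paths V E k l. uses_edge xs u v}" using xs by blast
  next
    fix ys assume "ys \<in> map f ` {xs \<in> shortest_paths V E k l. uses_edge xs u v}"
    then obtain xs where xs: "xs \<in> shortest_paths V E k l" "ys = map f xs" "uses_edge xs u v"
      by blast
    then have "uses_edge (map f xs) (f u) (f v)" using aut_uses_edge[OF f SP_set[OF xs(1)] uv] by simp
    then show "ys \<in> {ys \<in> map f ` shortest_paths V E k l. uses_edge ys (f u) (f v)}" using xs by blast
  qed
  have inj: "inj_on (map f) {xs \<in> shortest_paths V E k l. uses_edge xs u v}"
    using aut_inj_map[OF f] by (rule inj_on_subset) auto
  show ?thesis unfolding num_sp_edge_def seteq by (rule card_image[OF inj])
qed

lemma aut_betw:
  assumes f: "aut f" and uv: "u \<in> V" "v \<in> V"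
  shows "exp_edge_betw lam V E (f u) (f v) = exp_edge_betw lam V E u v"
proof -
  define h where "h = (\<lambda>(k,l). (f k, f l))"
  define g where "g = (\<lambda>(k,l). real (num_sp_edge V E k l (f u) (f v)) / real (num_sp V E k l) * lam ^ gdist V E k l)"
  have bij: "bij_betw h Pairs Pairs"
  proof (rule bij_betw_imageI)
    show "inj_on h Pairs" using aut_inj[OF f] by (auto simp: inj_on_def h_def Pairs_def)
    show "h ` Pairs = Pairs"
    proof
      show "h ` Pairs \<subseteq> Pairs" using aut_in[OF f] aut_inj[OF f]
        by (auto simp: h_def Pairs_def inj_on_def)
      show "Pairs \<subseteq> h ` Pairs"
      proof
        fix p assume p: "p \<in> Pairs"
        obtain k l where [simp]: "p = (k,l)" by (cases p)
        let ?g = "inv_into V f"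
        have kl: "k \<in> V" "l \<in> V" "k \<noteq> l" using p by (auto simp: Pairs_def)
        have "?g k \<in> V" "?g l \<in> V" using aut_in[OF aut_inv(1)[OF f]] kl by auto
        moreover have "?g k \<noteq> ?g l"
        proof
          assume "?g k = ?g l"
          then have "f (?g k) = f (?g l)" by simp
          then show False using aut_inv(3)[OF f] kl by simp
        qed
        ultimately have "(?g k, ?g l) \<in> Pairs" by (simp add: Pairs_def)
        moreover have "h (?g k, ?g l) = p" using p aut_inv(3)[OF f] by (auto simp: h_def Pairs_def)
        ultimately show "p \<in> h ` Pairs" by force
      qed
    qed
  qed
  have "exp_edge_betw lam V E (f u) (f v) = sum g Pairs / 2"
    unfolding exp_edge_betw_def g_def Pairs_def by simp
  also have "sum g Pairs = (\<Sum>p\<in>Pairs. g (h p))" by (rule sum.reindex_bij_betw[OF bij, symmetric])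
  also have "\<dots> = (\<Sum>p\<in>Pairs. (\<lambda>(k,l). real (num_sp_edge V E k l u v) / real (num_sp V E k l) * lam ^ gdist V E k l) p)"
  proof (rule sum.cong[OF refl])
    fix p assume p: "p \<in> Pairs"
    obtain k l where [simp]: "p = (k,l)" by (cases p)
    have kl: "k \<in> V" "l \<in> V" using p by (auto simp: Pairs_def)
    show "g (h p) = (\<lambda>(k,l). real (num_sp_edge V E k l u v) / real (num_sp V E k l) * lam ^ gdist V E k l) p"
      using aut_nse[OF f kl uv] aut_num_sp[OF f kl] aut_gdist[OF f kl] by (simp add: g_def h_def)
  qed
  finally show ?thesis unfolding exp_edge_betw_def Pairs_def by simp
qed

lemma aut_nbr: "aut f \<Longrightarrow> u \<in> V \<Longrightarrow> neighbours V E (f u) = f ` neighbours V E u"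
proof -
  assume f: "aut f" and u: "u \<in> V"
  show ?thesis
  proof
    show "f ` neighbours V E u \<subseteq> neighbours V E (f u)"
      using f u aut_in[OF f] by (auto simp: neighbours_def aut_def)
    show "neighbours V E (f u) \<subseteq> f ` neighbours V E u"
    proof
      fix w assume w: "w \<in> neighbours V E (f u)"
      let ?g = "inv_into V f"
      have wV: "w \<in> V" "E (f u) w" using w by (auto simp: neighbours_def)
      have gw: "?g w \<in> V" using aut_in[OF aut_inv(1)[OF f]] wV by simp
      have "E (f u) (f (?g w))" using wV aut_inv(3)[OF f] by simp
      then have "E u (?g w)" using f u gw by (simp add: aut_def)
      then have "?g w \<in> neighbours V E u" using gw by (simp add: neighbours_def)
      then show "w \<in> f ` neighbours V E u" using aut_inv(3)[OF f] wV by force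
    qed
  qed
qed

lemma aut_surplus:
  assumes f: "aut f" and u: "u \<in> V"
  shows "surplus lam V E (f u) = surplus lam V E u"
proof -
  have inj: "inj_on f (neighbours V E u)" using aut_inj[OF f] nbr_sub inj_on_subset by blast
  have c: "exp_c lam V E (f u) = exp_c lam V E u"
    unfolding exp_c_def aut_nbr[OF f u] sum.reindex[OF inj]
    using aut_betw[OF f u] nbr_sub by (intro sum.cong) auto
  have inj2: "inj_on f (V - {u})" using aut_inj[OF f] inj_on_subset by blast
  have eq: "V - {f u} = f ` (V - {u})" using aut_img[OF f] aut_inj[OF f] u by (simp add: inj_on_image_set_diff)
  have "exp_t lam V E (f u) = (\<Sum>v\<in>f ` (V - {u}). real (gdist V E (f u) v) * lam ^ gdist V E (f u) v)"
    unfolding exp_t_def eq ..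
  also have "\<dots> = (\<Sum>x\<in>V - {u}. real (gdist V E (f u) (f x)) * lam ^ gdist V E (f u) (f x))"
    by (rule sum.reindex[OF inj2, unfolded comp_def])
  also have "\<dots> = (\<Sum>x\<in>V - {u}. real (gdist V E u x) * lam ^ gdist V E u x)"
    using aut_gdist[OF f u] by (intro sum.cong) auto
  finally have t: "exp_t lam V E (f u) = exp_t lam V E u" unfolding exp_t_def .
  show ?thesis by (simp only: surplus_def c t)
qed

lemma vt_zero:
  assumes vt: "vertex_transitive V E" and ne: "V \<noteq> {}"
  shows "min_surplus lam V E = 0"
proof -
  obtain u where u: "u \<in> V" "min_surplus lam V E = surplus lam V E u" using min_surplus_in ne by blast
  have all: "\<And>v. v \<in> V \<Longrightarrow> surplus lam V E v = surplus lam V E u"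
  proof -
    fix v assume v: "v \<in> V"
    have "\<exists>f. bij_betw f V V \<and> (\<forall>x\<in>V. \<forall>y\<in>V. E x y \<longleftrightarrow> E (f x) (f y)) \<and> f u = v"
      using bspec[OF bspec[OF vt[unfolded vertex_transitive_def] u(1)] v] .
    then obtain f where ff: "bij_betw f V V \<and> (\<forall>x\<in>V. \<forall>y\<in>V. E x y \<longleftrightarrow> E (f x) (f y)) \<and> f u = v" ..
    then have "aut f" "f u = v" unfolding aut_def by simp_all
    then show "surplus lam V E v = surplus lam V E u" using aut_surplus u by blast
  qed
  have "0 = (\<Sum>v\<in>V. surplus lam V E v)" using sum_surplus by simp
  also have "\<dots> = real (card V) * surplus lam V E u" using all by simp
  finally have "real (card V) * surplus lam V E u = 0" by simp
  moreover have "card V > 0" using ne finV by (simp add: card_gt_0_iff)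
  ultimately show ?thesis using u by simp
qed

end



lemma walk_pot:
  fixes p :: "'a \<Rightarrow> nat"
  assumes w: "walk V E a b xs" and pe: "\<And>x y. E x y \<Longrightarrow> p y \<le> p x + 1"
  shows "p b \<le> p a + (length xs - 1)"
proof -
  have "\<forall>i. i < length xs \<longrightarrow> p (xs ! i) \<le> p (xs ! 0) + i"
  proof (intro allI)
    fix i show "i < length xs \<longrightarrow> p (xs ! i) \<le> p (xs ! 0) + i"
    proof (induction i)
      case 0 then show ?case by simp
    next
      case (Suc i)
      show ?case
      proof
        assume i: "Suc i < length xs"
        then have "E (xs ! i) (xs ! Suc i)" using w by (simp add: walk_def)
        then have "p (xs ! Suc i) \<le> p (xs ! i) + 1" using pe by blast
        then show "p (xs ! Suc i) \<le> p (xs ! 0) + Suc i" using Suc i by simp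
      qed
    qed
  qed
  moreover have "xs \<noteq> []" "hd xs = a" "last xs = b" using w by (auto simp: walk_def)
  ultimately have "\<forall>i<length xs. p (xs ! i) \<le> p a + i" "xs ! 0 = a" "xs ! (length xs - 1) = b"
    by (auto simp: hd_conv_nth last_conv_nth)
  moreover have "length xs - 1 < length xs" using \<open>xs \<noteq> []\<close> by simp
  ultimately show ?thesis by metis
qed

locale broom =
  fixes n D :: nat
  assumes D1: "1 \<le> D" and Dn: "D \<le> n - 1" and n2: "n \<ge> 2"
begin

abbreviation "BV \<equiv> broom_V n"
abbreviation "BE \<equiv> broom_E n D"

lemma BE_sym: "BE x y \<Longrightarrow> BE y x" by (auto simp: broom_E_def)

lemma simple: "simple_graph BV BE"
  unfolding simple_graph_def broom_V_def broom_E_def using D1 by auto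

lemma walk_path: "i \<le> D \<Longrightarrow> walk BV BE 0 i [0..<Suc i]"
  unfolding walk_def
proof (intro conjI allI impI)
  assume i: "i \<le> D"
  show "set [0..<Suc i] \<subseteq> BV" using i Dn n2 by (auto simp: broom_V_def)
  show "hd [0..<Suc i] = 0" by (simp del: upt_Suc add: upt_conv_Cons)
  fix j assume "Suc j < length [0..<Suc i]"
  then have "Suc j \<le> i" by simp
  then show "BE ([0..<Suc i] ! j) ([0..<Suc i] ! Suc j)" using i Dn n2
    by (simp del: upt_Suc add: nth_upt broom_E_def; linarith)
qed simp_all

lemma walk_leaf:
  assumes "D < j" "j < n"
  shows "walk BV BE 0 j ([0..<D] @ [j])"
  unfolding walk_def
proof (intro conjI allI impI)
  show "set ([0..<D] @ [j]) \<subseteq> BV" using assms Dn by (auto simp: broom_V_def)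
  show "hd ([0..<D] @ [j]) = 0" using D1 by (simp add: hd_append upt_conv_Cons)
  fix i assume i: "Suc i < length ([0..<D] @ [j])"
  show "BE (([0..<D] @ [j]) ! i) (([0..<D] @ [j]) ! Suc i)"
  proof (cases "Suc i < D")
    case True then show ?thesis using Dn n2 by (simp add: nth_append broom_E_def; linarith)
  next
    case False
    then have "Suc i = D" using i by simp
    then show ?thesis using assms Dn by (simp add: nth_append broom_E_def)
  qed
qed simp_all

lemma walk_any: "v \<in> BV \<Longrightarrow> \<exists>xs. walk BV BE 0 v xs"
proof (cases "v \<le> D")
  case True then show ?thesis using walk_path by blast
next
  case False
  assume "v \<in> BV"
  then have "v < n" by (simp add: broom_V_def)
  then show ?thesis using walk_leaf False by (meson not_le)
qed

lemma connected: "connected_graph BV BE"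
  unfolding connected_graph_def
proof (intro ballI)
  fix u v assume "u \<in> BV" "v \<in> BV"
  then obtain xs ys where "walk BV BE 0 u xs" "walk BV BE 0 v ys" using walk_any by blast
  then have "walk BV BE u v (rev xs @ tl ys)" using walk_rev BE_sym walk_append by metis
  then show "\<exists>xs. walk BV BE u v xs" by blast
qed

sublocale cgraph BV BE using simple connected by unfold_locales

lemma pot: "BE x y \<Longrightarrow> min y D \<le> min x D + 1"
  by (auto simp: broom_E_def)

lemma gdist_lb: "v \<in> BV \<Longrightarrow> min v D \<le> gdist BV BE 0 v"
proof -
  assume v: "v \<in> BV"
  have "0 \<in> BV" using n2 by (simp add: broom_V_def)
  then obtain xs where "walk BV BE 0 v xs" "length xs = Suc (gdist BV BE 0 v)" using gdist_ex v by blast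
  then show ?thesis using walk_pot[of BV BE 0 v xs "\<lambda>x. min x D"] pot by simp
qed

lemma gdist_path: "i \<le> D \<Longrightarrow> gdist BV BE 0 i = i"
  using gdist_le[OF walk_path[of i]] gdist_lb[of i] Dn n2 by (simp add: broom_V_def)

lemma gdist_leaf: "D < j \<Longrightarrow> j < n \<Longrightarrow> gdist BV BE 0 j = D"
  using gdist_le[OF walk_leaf[of j]] gdist_lb[of j] by (simp add: broom_V_def)

lemma nbr0:
  assumes "2 \<le> D \<or> n = 2"
  shows "neighbours BV BE 0 = {1}"
  using assms D1 Dn unfolding neighbours_def broom_V_def broom_E_def by auto

lemma card_BV: "card BV = n" by (simp add: broom_V_def)

lemma surplus0:
  assumes "2 \<le> D \<or> n = 2" "0 < lam" "lam < 1"
  shows "surplus lam BV BE 0 = lower_bound_expr lam n D"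
proof -
  have z: "(0::nat) \<in> BV" using n2 by (simp add: broom_V_def)
  have "surplus lam BV BE 0 = (\<Sum>l\<in>BV-{0}. gg lam (gdist BV BE 0 l))"
    using surplus_leaf[OF z _ nbr0[OF assms(1)], of lam] assms by (simp add: gg_def)
  also have "BV - {0} = {1..D} \<union> {D<..<n}" using Dn n2 by (auto simp: broom_V_def)
  also have "(\<Sum>l\<in>{1..D} \<union> {D<..<n}. gg lam (gdist BV BE 0 l))
      = (\<Sum>l\<in>{1..D}. gg lam (gdist BV BE 0 l)) + (\<Sum>l\<in>{D<..<n}. gg lam (gdist BV BE 0 l))"
    by (rule sum.union_disjoint) auto
  also have "(\<Sum>l\<in>{1..D}. gg lam (gdist BV BE 0 l)) = (\<Sum>l\<in>{1..D}. gg lam l)"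
    using gdist_path by (intro sum.cong) auto
  also have "(\<Sum>l\<in>{D<..<n}. gg lam (gdist BV BE 0 l)) = (\<Sum>l\<in>{D<..<n}. gg lam D)"
    using gdist_leaf by (intro sum.cong) auto
  also have "\<dots> = (real n - real D - 1) * gg lam D"
    using Dn n2 by (simp add: of_nat_diff)
  finally show ?thesis using lbe_alt[of lam n D] assms by simp
qed

end



lemma L1_zero: "lower_bound_expr lam n 1 = 0" if "lam \<noteq> 1"
  using lbe_alt[OF that, of n 1] by (simp add: gg_def)

lemma L2_neg: "0 < lam \<Longrightarrow> lam < 1 \<Longrightarrow> n \<ge> 3 \<Longrightarrow> lower_bound_expr lam n 2 < 0"
proof -
  assume a: "0 < lam" "lam < 1" "n \<ge> 3"
  have "lower_bound_expr lam n 2 = gg lam 2 + (real n - 3) * gg lam 2"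
    using lbe_alt[of lam n 2] a by (simp add: gg_def numeral_2_eq_2)
  also have "\<dots> = - (real n - 2) * lam^2" by (simp add: gg_def algebra_simps)
  also have "\<dots> < 0" using a by (intro mult_neg_pos) auto
  finally show ?thesis .
qed

lemma broom_part:
  assumes lam: "0 < lam" "lam < 1" and n: "n \<ge> 2"
  shows "\<exists>D\<in>{1..n-1}.
              surplus lam (broom_V n) (broom_E n D) 0 = Min (lower_bound_expr lam n ` {1..n-1})
            \<and> min_surplus lam (broom_V n) (broom_E n D) = Min (lower_bound_expr lam n ` {1..n-1})"
proof -
  let ?M = "Min (lower_bound_expr lam n ` {1..n-1})"
  have "?M \<in> lower_bound_expr lam n ` {1..n-1}" using n by (intro Min_in) auto
  then obtain D where D: "D \<in> {1..n-1}" "lower_bound_expr lam n D = ?M" by auto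
  have cond: "2 \<le> D \<or> n = 2"
  proof (rule ccontr)
    assume "\<not> (2 \<le> D \<or> n = 2)"
    then have "D = 1" "n \<ge> 3" using D n by auto
    then have "?M = 0" using D L1_zero lam by simp
    moreover have "?M \<le> lower_bound_expr lam n 2" using \<open>n \<ge> 3\<close> by (intro Min_le) auto
    moreover have "lower_bound_expr lam n 2 < 0" using L2_neg lam \<open>n \<ge> 3\<close> by blast
    ultimately show False by linarith
  qed
  interpret broom n D using D n by unfold_locales auto
  have s0: "surplus lam (broom_V n) (broom_E n D) 0 = ?M" using surplus0[OF cond lam] D by simp
  have "?M \<le> min_surplus lam (broom_V n) (broom_E n D)" using min_surplus_lb[OF lam card_BV n] .
  moreover have "min_surplus lam (broom_V n) (broom_E n D) \<le> surplus lam (broom_V n) (broom_E n D) 0"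
    using n by (intro min_surplus_le) (simp add: broom_V_def)
  ultimately have "min_surplus lam (broom_V n) (broom_E n D) = ?M" using s0 by linarith
  then show ?thesis using s0 D(1) by blast
qed

theorem theorem11:
  fixes lam :: real and V :: "'a set" and E :: "'a \<Rightarrow> 'a \<Rightarrow> bool" and n :: nat
  assumes "0 < lam" and "lam < 1"
    and "simple_graph V E" and "connected_graph V E"
    and "card V = n" and "n \<ge> 2"
  shows "Min (lower_bound_expr lam n ` {1..n-1}) \<le> min_surplus lam V E
         \<and> min_surplus lam V E \<le> 0
         \<and> (\<exists>D\<in>{1..n-1}.
              surplus lam (broom_V n) (broom_E n D) 0 = Min (lower_bound_expr lam n ` {1..n-1})
            \<and> min_surplus lam (broom_V n) (broom_E n D) = Min (lower_bound_expr lam n ` {1..n-1}))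
         \<and> (vertex_transitive V E \<longrightarrow> min_surplus lam V E = 0)"
proof -
  interpret cgraph V E using assms(3,4) by unfold_locales
  have ne: "V \<noteq> {}" using assms(5,6) by auto
  show ?thesis
  proof (intro conjI impI)
    show "Min (lower_bound_expr lam n ` {1..n-1}) \<le> min_surplus lam V E"
      by (rule min_surplus_lb[OF assms(1,2,5,6)])
    show "min_surplus lam V E \<le> 0" by (rule min_surplus_nonpos[OF ne])
    show "\<exists>D\<in>{1..n-1}.
              surplus lam (broom_V n) (broom_E n D) 0 = Min (lower_bound_expr lam n ` {1..n-1})
            \<and> min_surplus lam (broom_V n) (broom_E n D) = Min (lower_bound_expr lam n ` {1..n-1})"
      by (rule broom_part[OF assms(1,2,6)])
    show "vertex_transitive V E \<Longrightarrow> min_surplus lam V E = 0" by (rule vt_zero[OF _ ne])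
  qed
qed



end
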